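(* Let $a_1,a_2\ge0$ and $D=D_{a_1,a_2}$. (a) Let $S_1:D_1\to\mathbb{Z}_{\ge0}$. For any $h,h'\in D_1$, the local shadows $\operatorname{sh}(h;S_1)$ and $\operatorname{sh}(h';S_1)$ are either disjoint or one is contained in the other. (b) Let $S_2:D_2\to\mathbb{Z}_{\ge0}$. For any $v,v'\in D_2$, the local shadows $\operatorname{sh}(v;S_2)$ and $\operatorname{sh}(v';S_2)$ are either disjoint or one is contained in the other.
   Context: Maximal Dyck path: $D=D_{a_1,a_2}$ is the lattice path of unit East and North steps from $(0,0)$ to $(a_1,a_2)$ staying weakly below the diagonal of $[0,a_1]\times[0,a_2]$ and closest to it. $D_1$, $D_2$ are its sets of horizontal and vertical edges. Identify $(0,0)\equiv(a_1,a_2)$ so $D$ is a cyclic sequence of edges; for edges $e,e'$, $ee'$ is the subpath from $e$ to $e'$ inclusive following $D$ cyclically, $ee$ is $e$ alone, and $(ee')_1,(ee')_2$ are its horizontal and vertical edges. Local shadows: for $h\in D_1$, $\operatorname{sh}(h;S_1)=(he)_2$ where $he$ is the shortest subpath of $D$ starting at $h$ with $|(he)_2|=\sum_{h'\in(he)_1}S_1(h')$; if no such subpath exists, $\operatorname{sh}(h;S_1)=D_2$. For $v\in D_2$, $\operatorname{sh}(v;S_2)=(ev)_1$ where $ev$ is the shortest subpath of $D$ ending at $v$ with $|(ev)_1|=\sum_{v'\in(ev)_2}S_2(v')$; if no such subpath exists, $\operatorname{sh}(v;S_2)=D_1$. *)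

theory Defs
  imports Main
begin

text \<open>The maximal Dyck path D_{a1,a2} as a list of unit steps:
  True = East (horizontal edge), False = North (vertical edge).
  Edges are identified with their positions 0..n-1 in the list (n = a1 + a2).
  After the i-th East step the path rises to height floor(i*a2/a1), which is the
  highest lattice path staying weakly below the diagonal.\<close>

definition dyck_path :: "nat \<Rightarrow> nat \<Rightarrow> bool list" where
  "dyck_path a1 a2 =
     (if a1 = 0 then replicate a2 False
      else concat (map (\<lambda>i. True # replicate (i * a2 div a1 - (i - 1) * a2 div a1) False)
                       [1..<a1 + 1]))"

definition D1 :: "nat \<Rightarrow> nat \<Rightarrow> nat set" where
  "D1 a1 a2 = {i. i < length (dyck_path a1 a2) \<and> dyck_path a1 a2 ! i}"

definition D2 :: "nat \<Rightarrow> nat \<Rightarrow> nat set" where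
  "D2 a1 a2 = {i. i < length (dyck_path a1 a2) \<and> \<not> dyck_path a1 a2 ! i}"

definition cyc_from :: "nat \<Rightarrow> nat \<Rightarrow> nat \<Rightarrow> nat set" where
  "cyc_from n i k = {(i + j) mod n | j. j < k}"

definition cyc_to :: "nat \<Rightarrow> nat \<Rightarrow> nat \<Rightarrow> nat set" where
  "cyc_to n i k = {(i + n - j) mod n | j. j < k}"

definition shadow_h :: "nat \<Rightarrow> nat \<Rightarrow> (nat \<Rightarrow> nat) \<Rightarrow> nat \<Rightarrow> nat set" where
  "shadow_h a1 a2 S1 h =
    (let n = length (dyck_path a1 a2);
         P = (\<lambda>k. 1 \<le> k \<and> k \<le> n \<and>
               card (cyc_from n h k \<inter> D2 a1 a2) = (\<Sum>x \<in> cyc_from n h k \<inter> D1 a1 a2. S1 x))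
     in if \<exists>k. P k then cyc_from n h (LEAST k. P k) \<inter> D2 a1 a2 else D2 a1 a2)"

definition shadow_v :: "nat \<Rightarrow> nat \<Rightarrow> (nat \<Rightarrow> nat) \<Rightarrow> nat \<Rightarrow> nat set" where
  "shadow_v a1 a2 S2 v =
    (let n = length (dyck_path a1 a2);
         P = (\<lambda>k. 1 \<le> k \<and> k \<le> n \<and>
               card (cyc_to n v k \<inter> D1 a1 a2) = (\<Sum>x \<in> cyc_to n v k \<inter> D2 a1 a2. S2 x))
     in if \<exists>k. P k then cyc_to n v (LEAST k. P k) \<inter> D1 a1 a2 else D1 a1 a2)"

end

theory Submission
  imports Defs "HOL-Number_Theory.Cong"
begin


lemma f1: "(0::nat) < n \<Longrightarrow> ((i + a) mod n + b) mod n = (i + (a + b)) mod n"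
  by (simp add: mod_add_left_eq add.assoc)
lemma f2: "(y::nat) < n \<Longrightarrow> z < n \<Longrightarrow> (y + b) mod n = (z + b) mod n \<Longrightarrow> y = z"
  by (metis cong_add_rcancel_nat cong_def mod_less)
lemma f3: "(i::nat) < n \<Longrightarrow> j < n \<Longrightarrow> j' < n \<Longrightarrow> (i + j) mod n = (i + j') mod n \<Longrightarrow> j = j'"
  by (metis cong_add_lcancel_nat cong_def mod_less)
lemma b1: "(0::nat) < n \<Longrightarrow> a + b \<le> n \<Longrightarrow> ((i + n - a) mod n + n - b) mod n = (i + n - (a + b)) mod n"
proof -
  assume n: "0 < n" "a + b \<le> n"
  have "(i + n - a) mod n + n - b = (i + n - a) mod n + (n - b)" using n by simp
  then have "((i + n - a) mod n + n - b) mod n = (i + n - a + (n - b)) mod n" by (simp add: mod_add_left_eq)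
  also have "i + n - a + (n - b) = (i + n - (a + b)) + n" using n by simp
  finally show ?thesis by simp
qed
lemma b2: "(y::nat) < n \<Longrightarrow> z < n \<Longrightarrow> b \<le> n \<Longrightarrow> (y + n - b) mod n = (z + n - b) mod n \<Longrightarrow> y = z"
proof -
  assume a: "y < n" "z < n" "b \<le> n" "(y + n - b) mod n = (z + n - b) mod n"
  then have "(y + (n - b)) mod n = (z + (n - b)) mod n" by simp
  then show "y = z" using f2 a by blast
qed
lemma b3: "(i::nat) < n \<Longrightarrow> j < n \<Longrightarrow> j' < n \<Longrightarrow> (i + n - j) mod n = (i + n - j') mod n \<Longrightarrow> j = j'"
proof -
  assume a: "i < n" "j < n" "j' < n" "(i + n - j) mod n = (i + n - j') mod n"
  then have "(i + (n - j)) mod n = (i + (n - j')) mod n" by simp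
  then have "[n - j = n - j'] (mod n)" by (simp add: cong_def[symmetric] cong_add_lcancel_nat)
  then have e: "(n - j) mod n = (n - j') mod n" by (simp add: cong_def)
  show "j = j'"
  proof (cases "j = 0 \<or> j' = 0")
    case True
    have d: "(n::nat) dvd n - x \<Longrightarrow> x < n \<Longrightarrow> x = 0" for x
      by (metis diff_less dvd_imp_le le_eq_less_or_eq less_imp_diff_less not_less zero_less_diff gr0I)
    show ?thesis using True e a d by (auto simp: mod_less)
  next
    case False
    then show ?thesis using e a by (simp add: mod_less)
  qed
qed

definition Ig :: "(nat \<Rightarrow> nat \<Rightarrow> nat) \<Rightarrow> nat \<Rightarrow> nat \<Rightarrow> nat set" where
  "Ig g i k = {g i j | j. j < k}"

definition gsh :: "(nat \<Rightarrow> nat \<Rightarrow> nat) \<Rightarrow> nat \<Rightarrow> nat set \<Rightarrow> nat set \<Rightarrow> (nat \<Rightarrow> nat) \<Rightarrow> nat \<Rightarrow> nat set" where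
  "gsh g n A B S h = (let P = (\<lambda>k. 1 \<le> k \<and> k \<le> n \<and>
        card (Ig g h k \<inter> B) = (\<Sum>x \<in> Ig g h k \<inter> A. S x))
     in if \<exists>k. P k then Ig g h (LEAST k. P k) \<inter> B else B)"

lemma ivt_step:
  fixes F :: "nat \<Rightarrow> int"
  assumes "\<And>i. F (Suc i) \<le> F i + 1" "F a \<le> 0" "F b > 0" "a \<le> b"
  shows "\<exists>m. a \<le> m \<and> m \<le> b \<and> F m = 0"
  using assms(3,4)
proof (induction b)
  case 0
  then show ?case using assms(2) by auto
next
  case (Suc b)
  show ?case
  proof (cases "F b > 0")
    case True
    have "a \<noteq> Suc b" using Suc.prems assms(2) by auto
    then have "a \<le> b" using Suc.prems by auto
    then show ?thesis using Suc.IH True by auto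
  next
    case False
    have "a \<noteq> Suc b" using Suc.prems assms(2) by auto
    then have "a \<le> b" using Suc.prems by auto
    moreover have "F b = 0" using False assms(1)[of b] Suc.prems by linarith
    ultimately show ?thesis by auto
  qed
qed

locale cycg =
  fixes n :: nat and g :: "nat \<Rightarrow> nat \<Rightarrow> nat"
  assumes npos: "n > 0"
  and g0: "i < n \<Longrightarrow> g i 0 = i"
  and gcomp: "i < n \<Longrightarrow> a + b \<le> n \<Longrightarrow> g (g i a) b = g i (a + b)"
  and grange: "i < n \<Longrightarrow> g i a < n"
  and ginj1: "y < n \<Longrightarrow> z < n \<Longrightarrow> b \<le> n \<Longrightarrow> g y b = g z b \<Longrightarrow> y = z"
  and ginj2: "i < n \<Longrightarrow> j < n \<Longrightarrow> j' < n \<Longrightarrow> g i j = g i j' \<Longrightarrow> j = j'"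
begin

definition w :: "nat set \<Rightarrow> nat set \<Rightarrow> (nat \<Rightarrow> nat) \<Rightarrow> nat \<Rightarrow> int" where
  "w A B S x = of_bool (x \<in> B) - (if x \<in> A then int (S x) else 0)"

definition F :: "nat set \<Rightarrow> nat set \<Rightarrow> (nat \<Rightarrow> nat) \<Rightarrow> nat \<Rightarrow> nat \<Rightarrow> int" where
  "F A B S i k = (\<Sum>j<k. w A B S (g i j))"

lemma F_Suc: "F A B S i (Suc k) = F A B S i k + w A B S (g i k)"
  by (simp add: F_def)

lemma w_le1: "w A B S x \<le> 1"
  by (simp add: w_def)

lemma Fconv:
  assumes "i < n" "k \<le> n"
  shows "int (card (Ig g i k \<inter> B)) - int (\<Sum>x \<in> Ig g i k \<inter> A. S x) = F A B S i k"
proof -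
  have I: "Ig g i k = g i ` {..<k}" by (auto simp: Ig_def)
  have inj: "inj_on (g i) {..<k}" using assms by (auto simp: inj_on_def intro: ginj2)
  have fin: "finite (Ig g i k)" using I by simp
  have "int (card (Ig g i k \<inter> B)) = (\<Sum>x \<in> Ig g i k \<inter> B. 1)" by simp
  also have "\<dots> = (\<Sum>x \<in> Ig g i k. of_bool (x \<in> B))"
    using fin by (simp add: sum.inter_restrict)
  finally have c: "int (card (Ig g i k \<inter> B)) = (\<Sum>x \<in> Ig g i k. of_bool (x \<in> B))" .
  have "int (\<Sum>x \<in> Ig g i k \<inter> A. S x) = (\<Sum>x \<in> Ig g i k \<inter> A. int (S x))" by simp
  also have "\<dots> = (\<Sum>x \<in> Ig g i k. if x \<in> A then int (S x) else 0)"
    using fin by (simp add: sum.inter_restrict)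
  finally have s: "int (\<Sum>x \<in> Ig g i k \<inter> A. S x) = (\<Sum>x \<in> Ig g i k. if x \<in> A then int (S x) else 0)" .
  have "int (card (Ig g i k \<inter> B)) - int (\<Sum>x \<in> Ig g i k \<inter> A. S x) = (\<Sum>x \<in> Ig g i k. w A B S x)"
    unfolding c s w_def by (simp add: sum_subtractf)
  also have "\<dots> = F A B S i k"
    unfolding I F_def using inj by (simp add: sum.reindex)
  finally show ?thesis .
qed

lemma F_shift:
  assumes "h < n" "j' + m \<le> n"
  shows "F A B S h (j' + m) = F A B S h j' + F A B S (g h j') m"
  using assms(2)
proof (induction m)
  case 0 then show ?case by (simp add: F_def)
next
  case (Suc m)
  have "g (g h j') m = g h (j' + m)" using gcomp assms(1) Suc.prems by simp
  then show ?case using Suc by (simp add: F_Suc)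
qed

definition PP where
  "PP A B S h k = (1 \<le> k \<and> k \<le> n \<and> card (Ig g h k \<inter> B) = (\<Sum>x \<in> Ig g h k \<inter> A. S x))"

lemma PP_F: "h < n \<Longrightarrow> PP A B S h k = (1 \<le> k \<and> k \<le> n \<and> F A B S h k = 0)"
  unfolding PP_def using Fconv[where i=h and k=k and A=A and B=B and S=S] by (auto simp del: of_nat_sum)

lemma key:
  assumes AB: "A \<inter> B = {}" and hA: "h \<in> A" and h'A: "h' \<in> A" and hn: "h < n" and h'n: "h' < n"
  and Pk: "PP A B S h kh" and minkh: "\<And>k. k < kh \<Longrightarrow> \<not> PP A B S h k"
  and Pk': "PP A B S h' kh'" and minkh': "\<And>k. k < kh' \<Longrightarrow> \<not> PP A B S h' k"
  and mem: "h' \<in> Ig g h kh"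
  shows "Ig g h' kh' \<subseteq> Ig g h kh"
proof -
  obtain j' where j': "h' = g h j'" "j' < kh" using mem by (auto simp: Ig_def)
  have khn: "1 \<le> kh" "kh \<le> n" using Pk by (auto simp: PP_def)
  have kh'n: "1 \<le> kh'" "kh' \<le> n" using Pk' by (auto simp: PP_def)
  show ?thesis
  proof (cases "j' = 0")
    case True
    then have "h' = h" using j' g0 hn by simp
    then have "kh' = kh" using Pk Pk' minkh minkh' by (metis linorder_neq_iff)
    then show ?thesis using \<open>h' = h\<close> by simp
  next
    case False
    have wh: "w A B S h' \<le> 0" "w A B S h \<le> 0" using AB hA h'A by (auto simp: w_def)
    have neg: "1 \<le> j \<longrightarrow> j < kh \<longrightarrow> F A B S h j < 0" for j
    proof (induction j)
      case 0 then show ?case by simp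
    next
      case (Suc j)
      show ?case
      proof (intro impI)
        assume a: "1 \<le> Suc j" "Suc j < kh"
        have ne: "F A B S h (Suc j) \<noteq> 0" using minkh[OF a(2)] PP_F[OF hn] a khn by auto
        have "F A B S h (Suc j) \<le> 0"
        proof (cases "j = 0")
          case True
          then show ?thesis using wh g0[OF hn] by (simp add: F_def)
        next
          case False
          then have "F A B S h j < 0" using Suc.IH a by auto
          then show ?thesis using F_Suc[of A B S h j] w_le1[of A B S "g h j"] by linarith
        qed
        then show "F A B S h (Suc j) < 0" using ne by simp
      qed
    qed
    have Fj': "F A B S h j' < 0" using neg False j' by auto
    have Fkh: "F A B S h kh = 0" using Pk PP_F[OF hn] by auto
    have sh: "F A B S h kh = F A B S h j' + F A B S h' (kh - j')"
      using F_shift[OF hn, of j' "kh - j'" A B S] j' khn by simp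
    have pos: "F A B S h' (kh - j') > 0" using sh Fkh Fj' by linarith
    have one: "F A B S h' 1 \<le> 0" using wh g0[OF h'n] by (simp add: F_def)
    obtain m where m: "1 \<le> m" "m \<le> kh - j'" "F A B S h' m = 0"
    proof -
      have st: "\<And>i. F A B S h' (Suc i) \<le> F A B S h' i + 1"
        using F_Suc w_le1 by (metis add_left_mono)
      have "1 \<le> kh - j'" using pos one by (cases "kh - j' = 0") (auto simp: F_def)
      then show ?thesis using ivt_step[of "F A B S h'" 1 "kh - j'", OF st one pos] that by blast
    qed
    have "PP A B S h' m" using m PP_F[OF h'n] khn by auto
    then have "kh' \<le> m" using minkh' by (meson not_le)
    show ?thesis
    proof
      fix x assume "x \<in> Ig g h' kh'"
      then obtain j where j: "x = g h' j" "j < kh'" by (auto simp: Ig_def)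
      have "x = g h (j' + j)" using j j' gcomp[OF hn, of j' j] \<open>kh' \<le> m\<close> m khn by simp
      moreover have "j' + j < kh" using j \<open>kh' \<le> m\<close> m by simp
      ultimately show "x \<in> Ig g h kh" by (auto simp: Ig_def)
    qed
  qed
qed

lemma disj:
  assumes hn: "h < n" and h'n: "h' < n" and khn: "kh \<le> n" and kh'n: "kh' \<le> n"
  and n1: "h' \<notin> Ig g h kh" and n2: "h \<notin> Ig g h' kh'"
  shows "Ig g h kh \<inter> Ig g h' kh' = {}"
proof (rule ccontr)
  assume "Ig g h kh \<inter> Ig g h' kh' \<noteq> {}"
  then obtain a b where ab: "g h a = g h' b" "a < kh" "b < kh'" by (auto simp: Ig_def)
  show False
  proof (cases "b \<le> a")
    case True
    have y: "g h (a - b) < n" using grange hn by simp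
    have "g (g h (a - b)) b = g h a" using gcomp[OF hn, of "a-b" b] True ab khn by simp
    then have "g h (a - b) = h'" using ginj1[OF y h'n, of b] ab kh'n by simp
    then show False using n1 ab by (auto simp: Ig_def)
  next
    case False
    have y: "g h' (b - a) < n" using grange h'n by simp
    have "g (g h' (b - a)) a = g h' b" using gcomp[OF h'n, of "b-a" a] False ab kh'n by simp
    then have "g h' (b - a) = h" using ginj1[OF y hn, of a] ab khn by simp
    then show False using n2 ab by (auto simp: Ig_def)
  qed
qed

lemma main:
  assumes AB: "A \<inter> B = {}" and hA: "h \<in> A" and h'A: "h' \<in> A" and hn: "h < n" and h'n: "h' < n"
  shows "gsh g n A B S h \<inter> gsh g n A B S h' = {} \<or>
         gsh g n A B S h \<subseteq> gsh g n A B S h' \<or> gsh g n A B S h' \<subseteq> gsh g n A B S h"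
proof -
  have G: "gsh g n A B S x = (if \<exists>k. PP A B S x k then Ig g x (LEAST k. PP A B S x k) \<inter> B else B)" for x
    unfolding gsh_def PP_def Let_def by (rule refl)
  show ?thesis
  proof (cases "(\<exists>k. PP A B S h k) \<and> (\<exists>k. PP A B S h' k)")
    case False
    then show ?thesis unfolding G by auto
  next
    case True
    define kh where "kh = (LEAST k. PP A B S h k)"
    define kh' where "kh' = (LEAST k. PP A B S h' k)"
    have Pk: "PP A B S h kh" using True kh_def by (metis LeastI)
    have Pk': "PP A B S h' kh'" using True kh'_def by (metis LeastI)
    have m1: "\<And>k. k < kh \<Longrightarrow> \<not> PP A B S h k" using kh_def not_less_Least by blast
    have m2: "\<And>k. k < kh' \<Longrightarrow> \<not> PP A B S h' k" using kh'_def not_less_Least by blast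
    have e: "gsh g n A B S h = Ig g h kh \<inter> B" "gsh g n A B S h' = Ig g h' kh' \<inter> B"
      unfolding G kh_def kh'_def using True by auto
    have kn: "kh \<le> n" "kh' \<le> n" using Pk Pk' by (auto simp: PP_def)
    consider "h' \<in> Ig g h kh" | "h \<in> Ig g h' kh'" | "h' \<notin> Ig g h kh \<and> h \<notin> Ig g h' kh'" by blast
    then show ?thesis
    proof cases
      case 1
      then have "Ig g h' kh' \<subseteq> Ig g h kh" using key[OF AB hA h'A hn h'n Pk m1 Pk' m2] by blast
      then show ?thesis unfolding e by blast
    next
      case 2
      then have "Ig g h kh \<subseteq> Ig g h' kh'" using key[OF AB h'A hA h'n hn Pk' m2 Pk m1] by blast
      then show ?thesis unfolding e by blast
    next
      case 3
      then have "Ig g h kh \<inter> Ig g h' kh' = {}" using disj hn h'n kn by blast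
      then show ?thesis unfolding e by blast
    qed
  qed
qed

end


lemma cycg_f: "0 < n \<Longrightarrow> cycg n (\<lambda>i j. (i + j) mod n)"
  by unfold_locales (auto intro: f2 f3 simp: f1)

lemma cycg_b: "0 < n \<Longrightarrow> cycg n (\<lambda>i j. (i + n - j) mod n)"
  by unfold_locales (auto intro: b2 b3 simp: b1)

lemma sh_h_eq: "shadow_h a1 a2 S1 h = gsh (\<lambda>i j. (i + j) mod length (dyck_path a1 a2)) (length (dyck_path a1 a2)) (D1 a1 a2) (D2 a1 a2) S1 h"
proof -
  have e: "cyc_from n = Ig (\<lambda>i j. (i + j) mod n)" for n
    by (auto simp: cyc_from_def Ig_def fun_eq_iff)
  show ?thesis unfolding shadow_h_def gsh_def Let_def e by (rule refl)
qed

lemma sh_v_eq: "shadow_v a1 a2 S2 h = gsh (\<lambda>i j. (i + length (dyck_path a1 a2) - j) mod length (dyck_path a1 a2)) (length (dyck_path a1 a2)) (D2 a1 a2) (D1 a1 a2) S2 h"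
proof -
  have e: "cyc_to n = Ig (\<lambda>i j. (i + n - j) mod n)" for n
    by (auto simp: cyc_to_def Ig_def fun_eq_iff)
  show ?thesis unfolding shadow_v_def gsh_def Let_def e by (rule refl)
qed

theorem lemma4p10:
  fixes a1 a2 :: nat and S1 S2 :: "nat \<Rightarrow> nat"
  shows "(\<forall>h \<in> D1 a1 a2. \<forall>h' \<in> D1 a1 a2.
            shadow_h a1 a2 S1 h \<inter> shadow_h a1 a2 S1 h' = {} \<or>
            shadow_h a1 a2 S1 h \<subseteq> shadow_h a1 a2 S1 h' \<or>
            shadow_h a1 a2 S1 h' \<subseteq> shadow_h a1 a2 S1 h)
       \<and> (\<forall>v \<in> D2 a1 a2. \<forall>v' \<in> D2 a1 a2.
            shadow_v a1 a2 S2 v \<inter> shadow_v a1 a2 S2 v' = {} \<or>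
            shadow_v a1 a2 S2 v \<subseteq> shadow_v a1 a2 S2 v' \<or>
            shadow_v a1 a2 S2 v' \<subseteq> shadow_v a1 a2 S2 v)"
proof (intro conjI ballI)
  have AB: "D1 a1 a2 \<inter> D2 a1 a2 = {}" "D2 a1 a2 \<inter> D1 a1 a2 = {}" by (auto simp: D1_def D2_def)
  fix h h' assume h: "h \<in> D1 a1 a2" and h': "h' \<in> D1 a1 a2"
  have lt: "h < length (dyck_path a1 a2)" "h' < length (dyck_path a1 a2)" using h h' by (auto simp: D1_def)
  then have "0 < length (dyck_path a1 a2)" by linarith
  from cycg.main[OF cycg_f[OF this] AB(1) h h' lt]
  show "shadow_h a1 a2 S1 h \<inter> shadow_h a1 a2 S1 h' = {} \<or>
            shadow_h a1 a2 S1 h \<subseteq> shadow_h a1 a2 S1 h' \<or>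
            shadow_h a1 a2 S1 h' \<subseteq> shadow_h a1 a2 S1 h" unfolding sh_h_eq .
next
  have AB: "D2 a1 a2 \<inter> D1 a1 a2 = {}" by (auto simp: D1_def D2_def)
  fix h h' assume h: "h \<in> D2 a1 a2" and h': "h' \<in> D2 a1 a2"
  have lt: "h < length (dyck_path a1 a2)" "h' < length (dyck_path a1 a2)" using h h' by (auto simp: D2_def)
  then have "0 < length (dyck_path a1 a2)" by linarith
  from cycg.main[OF cycg_b[OF this] AB h h' lt]
  show "shadow_v a1 a2 S2 h \<inter> shadow_v a1 a2 S2 h' = {} \<or>
            shadow_v a1 a2 S2 h \<subseteq> shadow_v a1 a2 S2 h' \<or>
            shadow_v a1 a2 S2 h' \<subseteq> shadow_v a1 a2 S2 h" unfolding sh_v_eq .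
qed

end
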